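(* Let $\rho$ be an $n$-qubit symmetric state and $\mathcal S$ a collection of subsets of $[n]$ such that the hypergraph $([n],\mathcal S)$ is connected. Then every $\sigma\in\mathcal C(\rho,\mathcal S)$ is a symmetric state.
   Context: Let $[n]=\{1,\dots,n\}$, $\mathcal H_{[n]}=(\mathbb C^2)^{\otimes n}$, and for $S\subseteq[n]$ let $\rho_S$ be the partial trace of $\rho$ over qubits outside $S$. $\mathcal C(\rho,\mathcal S)=\{\sigma\text{ density matrix on }\mathcal H_{[n]}:\sigma_S=\rho_S\ \forall S\in\mathcal S\}$. A state is symmetric if its range is contained in the subspace of vectors invariant under swapping any two qubits. The hypergraph $([n],\mathcal S)$ is connected if for every partition of $[n]$ into nonempty sets $X,Y$ some $S\in\mathcal S$ intersects both $X$ and $Y$. *)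

theory Defs
  imports Complex_Main "HOL-Library.Complex_Order" "HOL-Combinatorics.Transposition"
begin

text \<open>Computational basis of (C^2)^{\<otimes>n}: a basis vector |x_1...x_n> is encoded by
  the set of qubits in state |1>, i.e. by a subset of {1..n}.\<close>

type_synonym qop = "nat set \<Rightarrow> nat set \<Rightarrow> complex"
type_synonym qvec = "nat set \<Rightarrow> complex"

definition basis_idx :: "nat \<Rightarrow> nat set set" where
  "basis_idx n = Pow {1..n}"

definition apply_op :: "nat \<Rightarrow> qop \<Rightarrow> qvec \<Rightarrow> qvec" where
  "apply_op n M v = (\<lambda>x. \<Sum>y\<in>basis_idx n. M x y * v y)"

definition density_matrix :: "nat \<Rightarrow> qop \<Rightarrow> bool" where
  "density_matrix n M \<longleftrightarrow>
     (\<forall>x\<in>basis_idx n. \<forall>y\<in>basis_idx n. M y x = cnj (M x y)) \<and>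
     (\<forall>v. 0 \<le> (\<Sum>x\<in>basis_idx n. \<Sum>y\<in>basis_idx n. cnj (v x) * M x y * v y)) \<and>
     (\<Sum>x\<in>basis_idx n. M x x) = 1"

definition partial_trace :: "nat \<Rightarrow> nat set \<Rightarrow> qop \<Rightarrow> qop" where
  "partial_trace n S M = (\<lambda>a b. \<Sum>c\<in>Pow ({1..n} - S). M (a \<union> c) (b \<union> c))"

definition compatible_states :: "nat \<Rightarrow> qop \<Rightarrow> nat set set \<Rightarrow> qop set" where
  "compatible_states n \<rho> \<SS> = {\<sigma>. density_matrix n \<sigma> \<and>
     (\<forall>S\<in>\<SS>. \<forall>a\<in>Pow S. \<forall>b\<in>Pow S. partial_trace n S \<sigma> a b = partial_trace n S \<rho> a b)}"

definition swap_invariant :: "nat \<Rightarrow> qvec \<Rightarrow> bool" where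
  "swap_invariant n v \<longleftrightarrow>
     (\<forall>i\<in>{1..n}. \<forall>j\<in>{1..n}. \<forall>x\<in>basis_idx n. v (transpose i j ` x) = v x)"

definition symmetric_state :: "nat \<Rightarrow> qop \<Rightarrow> bool" where
  "symmetric_state n M \<longleftrightarrow> density_matrix n M \<and>
     (\<forall>v. swap_invariant n (apply_op n M v))"

definition hypergraph_connected :: "nat \<Rightarrow> nat set set \<Rightarrow> bool" where
  "hypergraph_connected n \<SS> \<longleftrightarrow>
     (\<forall>X Y. X \<noteq> {} \<longrightarrow> Y \<noteq> {} \<longrightarrow> X \<inter> Y = {} \<longrightarrow> X \<union> Y = {1..n} \<longrightarrow>
        (\<exists>S\<in>\<SS>. S \<inter> X \<noteq> {} \<and> S \<inter> Y \<noteq> {}))"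

end

theory Submission
  imports Defs
begin

definition qf :: "'a set \<Rightarrow> ('a \<Rightarrow> 'a \<Rightarrow> complex) \<Rightarrow> ('a \<Rightarrow> complex) \<Rightarrow> complex" where
  "qf B M v = (\<Sum>x\<in>B. \<Sum>y\<in>B. cnj (v x) * M x y * v y)"

lemma real_ineq_aux:
  fixes n c :: real
  assumes n: "n \<ge> 0" and c: "c \<ge> 0" and h: "\<And>t. 0 \<le> 2*t*n + t^2*c"
  shows "n = 0"
proof (rule ccontr)
  assume "n \<noteq> 0" then have np: "n > 0" using n by simp
  define t where "t = - n/(c+1)"
  have h1: "0 \<le> 2*t*n + t^2*c" by (rule h)
  have c1: "c + 1 \<noteq> 0" using c by simp
  have eq: "(2*t*n + t^2*c) * (c+1)^2 = - (n^2*(c+2))"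
  proof -
    have a1: "t * (c+1) = - n" using c1 by (simp add: t_def)
    have "(2*t*n + t^2*c) * (c+1)^2 = 2*n*(t*(c+1))*(c+1) + (t*(c+1))^2*c"
      by (simp add: algebra_simps power2_eq_square)
    also have "\<dots> = - (n^2*(c+2))" unfolding a1 by (simp add: algebra_simps power2_eq_square)
    finally show ?thesis .
  qed
  have "0 \<le> (2*t*n + t^2*c) * (c+1)^2" using h1 by simp
  moreover have "- (n^2*(c+2)) < 0" using np c by (simp add: add_pos_nonneg)
  ultimately show False using eq by linarith
qed

lemma psd_kernel:
  fixes M :: "'a \<Rightarrow> 'a \<Rightarrow> complex"
  assumes fin: "finite B"
    and herm: "\<forall>a\<in>B. \<forall>b\<in>B. M b a = cnj (M a b)"
    and psd: "\<forall>v. 0 \<le> qf B M v"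
    and q0: "qf B M w = 0"
    and a: "a \<in> B"
  shows "(\<Sum>b\<in>B. M a b * w b) = 0"
proof -
  define u where "u = (\<lambda>a. \<Sum>b\<in>B. M a b * w b)"
  define N where "N = (\<Sum>a\<in>B. cnj (u a) * u a)"
  have N1: "(\<Sum>x\<in>B. \<Sum>y\<in>B. cnj (u x) * M x y * w y) = N"
    unfolding N_def u_def by (simp add: sum_distrib_left mult.assoc)
  have N2: "(\<Sum>x\<in>B. \<Sum>y\<in>B. cnj (w x) * M x y * u y) = N"
  proof -
    have "(\<Sum>x\<in>B. \<Sum>y\<in>B. cnj (w x) * M x y * u y) = (\<Sum>y\<in>B. \<Sum>x\<in>B. cnj (w x) * M x y * u y)"
      by (rule sum.swap)
    also have "\<dots> = (\<Sum>y\<in>B. u y * cnj (\<Sum>x\<in>B. M y x * w x))"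
    proof (intro sum.cong refl)
      fix y assume y: "y \<in> B"
      have "cnj (\<Sum>x\<in>B. M y x * w x) = (\<Sum>x\<in>B. cnj (w x) * M x y)"
      proof (subst cnj_sum, intro sum.cong refl)
        fix x assume x: "x \<in> B"
        have "M x y = cnj (M y x)" using bspec[OF bspec[OF herm y] x] .
        then show "cnj (M y x * w x) = cnj (w x) * M x y" by simp
      qed
      then show "(\<Sum>x\<in>B. cnj (w x) * M x y * u y) = u y * cnj (\<Sum>x\<in>B. M y x * w x)"
        by (simp add: sum_distrib_left sum_distrib_right mult_ac)
    qed
    also have "\<dots> = N" unfolding N_def u_def by (simp add: mult.commute)
    finally show ?thesis .
  qed
  have expand: "qf B M (\<lambda>a. w a + of_real t * u a) = qf B M w + 2 * of_real t * N + (of_real t)^2 * qf B M u" for t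
  proof -
    have "qf B M (\<lambda>a. w a + of_real t * u a) =
       (\<Sum>x\<in>B. \<Sum>y\<in>B. cnj (w x) * M x y * w y + of_real t * (cnj (w x) * M x y * u y)
           + of_real t * (cnj (u x) * M x y * w y) + (of_real t)^2 * (cnj (u x) * M x y * u y))"
      unfolding qf_def by (intro sum.cong refl) (simp add: algebra_simps power2_eq_square)
    also have "\<dots> = qf B M w + of_real t * (\<Sum>x\<in>B. \<Sum>y\<in>B. cnj (w x) * M x y * u y)
        + of_real t * (\<Sum>x\<in>B. \<Sum>y\<in>B. cnj (u x) * M x y * w y) + (of_real t)^2 * qf B M u"
      unfolding qf_def by (simp add: sum.distrib sum_distrib_left)
    also have "\<dots> = qf B M w + of_real t * N + of_real t * N + (of_real t)^2 * qf B M u"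
      unfolding N1 N2 ..
    finally show ?thesis by simp
  qed
  have Nre: "N = of_real (\<Sum>a\<in>B. (cmod (u a))^2)"
    unfolding N_def of_real_sum by (intro sum.cong refl) (simp only: complex_norm_square mult.commute)
  have qu: "0 \<le> Re (qf B M u)" using psd by (simp add: less_eq_complex_def)
  have "0 \<le> 2*t*(\<Sum>a\<in>B. (cmod (u a))^2) + t^2 * Re (qf B M u)" for t
  proof -
    have "0 \<le> Re (qf B M (\<lambda>a. w a + of_real t * u a))" using psd by (simp add: less_eq_complex_def)
    also have "\<dots> = 2*t*(\<Sum>a\<in>B. (cmod (u a))^2) + t^2 * Re (qf B M u)"
      unfolding expand q0 Nre by (simp add: power2_eq_square)
    finally show ?thesis .
  qed
  from real_ineq_aux[OF _ qu this] have "(\<Sum>a\<in>B. (cmod (u a))^2) = 0"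
    by (simp add: sum_nonneg)
  then have "\<forall>a\<in>B. (cmod (u a))^2 = 0" using fin by (simp add: sum_nonneg_eq_0_iff)
  then show ?thesis using a unfolding u_def by simp
qed


lemma sum_two_point:
  assumes fin: "finite B" and y: "y \<in> B" and y': "y' \<in> B" and ne: "y \<noteq> y'"
    and z: "\<And>b. b \<in> B \<Longrightarrow> b \<noteq> y \<Longrightarrow> b \<noteq> y' \<Longrightarrow> f b = 0"
  shows "(\<Sum>b\<in>B. f b) = f y + f y'"
proof -
  have "(\<Sum>b\<in>B. f b) = (\<Sum>b\<in>{y,y'}. f b)"
    using fin y y' z by (intro sum.mono_neutral_right) auto
  then show ?thesis using ne by simp
qed

lemma two_point_row:
  fixes M :: "'a \<Rightarrow> 'a \<Rightarrow> complex"
  assumes fin: "finite B" and y: "y \<in> B" and y': "y' \<in> B" and ne: "y \<noteq> y'"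
  shows "(\<Sum>b\<in>B. M a b * (if b = y then 1 else if b = y' then -1 else 0)) = M a y - M a y'"
  by (subst sum_two_point[OF fin y y' ne]) (use ne in auto)

lemma two_point_qf:
  fixes M :: "'a \<Rightarrow> 'a \<Rightarrow> complex"
  assumes fin: "finite B" and y: "y \<in> B" and y': "y' \<in> B" and ne: "y \<noteq> y'"
  shows "qf B M (\<lambda>b. if b = y then 1 else if b = y' then -1 else 0) = M y y - M y y' - M y' y + M y' y'"
proof -
  have "qf B M (\<lambda>b. if b = y then 1 else if b = y' then -1 else 0)
      = (\<Sum>x\<in>B. cnj (if x = y then 1 else if x = y' then -1 else 0) * (M x y - M x y'))"
    unfolding qf_def
  proof (intro sum.cong refl)
    fix x show "(\<Sum>ya\<in>B. cnj (if x = y then 1 else if x = y' then - 1 else 0) * M x ya * (if ya = y then 1 else if ya = y' then - 1 else 0))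
      = cnj (if x = y then 1 else if x = y' then - 1 else 0) * (M x y - M x y')"
      using two_point_row[OF fin y y' ne, of M x] by (simp add: sum_distrib_left[symmetric] mult.assoc)
  qed
  also have "\<dots> = M y y - M y y' - M y' y + M y' y'"
    by (subst sum_two_point[OF fin y y' ne]) (use ne in auto)
  finally show ?thesis .
qed

lemma finite_basis: "finite (basis_idx n)" by (simp add: basis_idx_def)

lemma tau_in:
  assumes "i \<in> {1..n}" "j \<in> {1..n}" "x \<in> basis_idx n"
  shows "transpose i j ` x \<in> basis_idx n"
  using assms unfolding basis_idx_def by (auto simp: transpose_def)

lemma tau_tau: "transpose i j ` (transpose i j ` x) = x"
  by (simp add: image_comp)

definition inv_ij :: "nat \<Rightarrow> qop \<Rightarrow> nat \<Rightarrow> nat \<Rightarrow> bool" where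
  "inv_ij n M i j \<longleftrightarrow> (\<forall>x\<in>basis_idx n. \<forall>y\<in>basis_idx n. M (transpose i j ` x) y = M x y)"

lemma row_inv_of_sym:
  assumes "symmetric_state n M" "i \<in> {1..n}" "j \<in> {1..n}"
  shows "inv_ij n M i j"
  unfolding inv_ij_def
proof (intro ballI)
  fix x y assume x: "x \<in> basis_idx n" and y: "y \<in> basis_idx n"
  have "swap_invariant n (apply_op n M (\<lambda>z. if z = y then 1 else 0))"
    using assms(1) unfolding symmetric_state_def by blast
  then have "apply_op n M (\<lambda>z. if z = y then 1 else 0) (transpose i j ` x) = apply_op n M (\<lambda>z. if z = y then 1 else 0) x"
    using assms x unfolding swap_invariant_def by blast
  then show "M (transpose i j ` x) y = M x y"
    using y finite_basis[of n] by (simp add: apply_op_def if_distrib cong: if_cong)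
qed

lemma sym_of_row_inv:
  assumes "density_matrix n M" "\<forall>i\<in>{1..n}. \<forall>j\<in>{1..n}. inv_ij n M i j"
  shows "symmetric_state n M"
  unfolding symmetric_state_def swap_invariant_def
proof (intro conjI allI ballI)
  fix v i j x assume i: "i \<in> {1..n}" and j: "j \<in> {1..n}" and x: "x \<in> basis_idx n"
  show "apply_op n M v (transpose i j ` x) = apply_op n M v x"
    unfolding apply_op_def using assms(2) i j x by (auto simp: inv_ij_def intro!: sum.cong)
qed (fact assms(1))

lemma col_inv:
  assumes "density_matrix n M" "inv_ij n M i j" "x \<in> basis_idx n" "y \<in> basis_idx n"
    "i \<in> {1..n}" "j \<in> {1..n}"
  shows "M x (transpose i j ` y) = M x y"
proof -
  have h: "\<forall>x\<in>basis_idx n. \<forall>y\<in>basis_idx n. M y x = cnj (M x y)"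
    using assms(1) unfolding density_matrix_def by blast
  have "M x (transpose i j ` y) = cnj (M (transpose i j ` y) x)"
    using h tau_in[OF assms(5,6,4)] assms(3) by (metis complex_cnj_cnj)
  also have "\<dots> = cnj (M y x)" using assms(2-4) unfolding inv_ij_def by simp
  also have "\<dots> = M x y" using bspec[OF bspec[OF h assms(3)] assms(4)] by simp
  finally show ?thesis .
qed


lemma tau_union:
  assumes "i \<in> S" "j \<in> S" "c \<inter> S = {}"
  shows "transpose i j ` (a \<union> c) = transpose i j ` a \<union> c"
proof -
  have "transpose i j ` c = c" using assms by (intro transpose_image_eq) auto
  then show ?thesis by (simp add: image_Un)
qed

lemma pt_row_inv:
  assumes inv: "inv_ij n M i j" and S: "S \<subseteq> {1..n}" and ij: "i \<in> S" "j \<in> S" and a: "a \<subseteq> S" and b: "b \<subseteq> S"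
  shows "partial_trace n S M (transpose i j ` a) b = partial_trace n S M a b"
  unfolding partial_trace_def
proof (intro sum.cong refl)
  fix c assume c: "c \<in> Pow ({1..n} - S)"
  have "transpose i j ` a \<union> c = transpose i j ` (a \<union> c)" using tau_union[OF ij, of c a] c by auto
  moreover have "a \<union> c \<in> basis_idx n" "b \<union> c \<in> basis_idx n" using a b c S by (auto simp: basis_idx_def)
  ultimately show "M (transpose i j ` a \<union> c) (b \<union> c) = M (a \<union> c) (b \<union> c)"
    using inv unfolding inv_ij_def by simp
qed

lemma pt_col_inv:
  assumes dm: "density_matrix n M" and inv: "inv_ij n M i j" and S: "S \<subseteq> {1..n}" and ij: "i \<in> S" "j \<in> S" and a: "a \<subseteq> S" and b: "b \<subseteq> S"
  shows "partial_trace n S M a (transpose i j ` b) = partial_trace n S M a b"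
  unfolding partial_trace_def
proof (intro sum.cong refl)
  fix c assume c: "c \<in> Pow ({1..n} - S)"
  have eq: "transpose i j ` b \<union> c = transpose i j ` (b \<union> c)" using tau_union[OF ij, of c b] c by auto
  have m: "a \<union> c \<in> basis_idx n" "b \<union> c \<in> basis_idx n" using a b c S by (auto simp: basis_idx_def)
  have "i \<in> {1..n}" "j \<in> {1..n}" using ij S by auto
  then show "M (a \<union> c) (transpose i j ` b \<union> c) = M (a \<union> c) (b \<union> c)"
    unfolding eq using col_inv[OF dm inv m] by simp
qed

lemma step:
  assumes dr: "density_matrix n \<rho>" and rinv: "inv_ij n \<rho> i j"
    and ds: "density_matrix n \<sigma>"
    and S: "S \<subseteq> {1..n}" and ij: "i \<in> S" "j \<in> S"
    and comp: "\<forall>a\<in>Pow S. \<forall>b\<in>Pow S. partial_trace n S \<sigma> a b = partial_trace n S \<rho> a b"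
  shows "inv_ij n \<sigma> i j"
proof -
  let ?B = "basis_idx n"
  let ?t = "transpose i j"
  define Q where "Q z = \<sigma> z z - \<sigma> z (?t ` z) - \<sigma> (?t ` z) z + \<sigma> (?t ` z) (?t ` z)" for z
  have i: "i \<in> {1..n}" and j: "j \<in> {1..n}" using S ij by auto
  have psd: "\<forall>v. 0 \<le> qf ?B \<sigma> v" using ds unfolding density_matrix_def qf_def by blast
  have herm: "\<forall>x\<in>?B. \<forall>y\<in>?B. \<sigma> y x = cnj (\<sigma> x y)" using ds unfolding density_matrix_def by blast
  have Qnn: "0 \<le> Q z" if z: "z \<in> ?B" for z
  proof (cases "?t ` z = z")
    case True then show ?thesis by (simp add: Q_def)
  next
    case False
    then show ?thesis using two_point_qf[OF finite_basis z tau_in[OF i j z], of \<sigma>] psd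
      unfolding Q_def by (metis (no_types, lifting))
  qed
  have Qsum: "(\<Sum>c\<in>Pow ({1..n} - S). Q (a \<union> c)) = 0" if a: "a \<subseteq> S" for a
  proof -
    have ta: "?t ` a \<subseteq> S" using a ij by (auto simp: transpose_def)
    have "(\<Sum>c\<in>Pow ({1..n} - S). Q (a \<union> c)) = (\<Sum>c\<in>Pow ({1..n} - S).
        \<sigma> (a \<union> c) (a \<union> c) - \<sigma> (a \<union> c) (?t ` a \<union> c) - \<sigma> (?t ` a \<union> c) (a \<union> c) + \<sigma> (?t ` a \<union> c) (?t ` a \<union> c))"
    proof (intro sum.cong refl)
      fix c assume "c \<in> Pow ({1..n} - S)"
      then have "c \<inter> S = {}" by auto
      then have "?t ` (a \<union> c) = ?t ` a \<union> c" using tau_union[OF ij] by blast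
      then show "Q (a \<union> c) = \<sigma> (a \<union> c) (a \<union> c) - \<sigma> (a \<union> c) (?t ` a \<union> c) - \<sigma> (?t ` a \<union> c) (a \<union> c) + \<sigma> (?t ` a \<union> c) (?t ` a \<union> c)"
        unfolding Q_def by simp
    qed
    also have "\<dots> = partial_trace n S \<sigma> a a - partial_trace n S \<sigma> a (?t ` a) - partial_trace n S \<sigma> (?t ` a) a + partial_trace n S \<sigma> (?t ` a) (?t ` a)"
      unfolding partial_trace_def by (simp add: sum.distrib sum_subtractf)
    also have "\<dots> = partial_trace n S \<rho> a a - partial_trace n S \<rho> a (?t ` a) - partial_trace n S \<rho> (?t ` a) a + partial_trace n S \<rho> (?t ` a) (?t ` a)"
      using comp a ta by simp
    also have "\<dots> = 0"
      using pt_row_inv[OF rinv S ij] pt_col_inv[OF dr rinv S ij] a ta by simp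
    finally show ?thesis .
  qed
  have colinv: "\<sigma> x (?t ` y) = \<sigma> x y" if x: "x \<in> ?B" and y: "y \<in> ?B" for x y
  proof (cases "?t ` y = y")
    case True then show ?thesis by simp
  next
    case False
    define a where "a = y \<inter> S"
    define c where "c = y - S"
    have yac: "y = a \<union> c" unfolding a_def c_def by auto
    have c: "c \<in> Pow ({1..n} - S)" using y unfolding c_def basis_idx_def by auto
    have "\<forall>c\<in>Pow ({1..n} - S). 0 \<le> Q (a \<union> c)"
    proof
      fix c assume "c \<in> Pow ({1..n} - S)"
      then have "a \<union> c \<in> ?B" using y unfolding a_def basis_idx_def by auto
      then show "0 \<le> Q (a \<union> c)" by (rule Qnn)
    qed
    then have "\<forall>c\<in>Pow ({1..n} - S). Q (a \<union> c) = 0"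
      using Qsum[of a] sum_nonneg_eq_0_iff[of "Pow ({1..n} - S)" "\<lambda>c. Q (a \<union> c)"] by (simp add: a_def)
    then have "Q y = 0" using c yac by auto
    then have "qf ?B \<sigma> (\<lambda>b. if b = y then 1 else if b = ?t ` y then -1 else 0) = 0"
      using two_point_qf[OF finite_basis y tau_in[OF i j y]] False unfolding Q_def by metis
    from psd_kernel[OF finite_basis herm psd this x] two_point_row[OF finite_basis y tau_in[OF i j y]] False
    show ?thesis by (metis eq_iff_diff_eq_0)
  qed
  show ?thesis unfolding inv_ij_def
  proof (intro ballI)
    fix x y assume x: "x \<in> ?B" and y: "y \<in> ?B"
    have tx: "?t ` x \<in> ?B" using tau_in[OF i j x] .
    have "\<sigma> (?t ` x) y = cnj (\<sigma> y (?t ` x))" using bspec[OF bspec[OF herm y] tx] .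
    also have "\<dots> = cnj (\<sigma> y x)" using colinv[OF y x] by simp
    also have "\<dots> = \<sigma> x y" using bspec[OF bspec[OF herm x] y] by simp
    finally show "\<sigma> (?t ` x) y = \<sigma> x y" .
  qed
qed


lemma inv_refl: "inv_ij n M i i" unfolding inv_ij_def by simp

lemma inv_sym: "inv_ij n M i j \<Longrightarrow> inv_ij n M j i"
  unfolding inv_ij_def by (metis transpose_commute)

lemma inv_trans:
  assumes "i \<in> {1..n}" "j \<in> {1..n}" "k \<in> {1..n}" "inv_ij n M i j" "inv_ij n M j k"
  shows "inv_ij n M i k"
proof (cases "i = k \<or> i = j \<or> j = k")
  case True then show ?thesis using assms(4,5) inv_refl by auto
next
  case False
  then have eq: "transpose i k = transpose i j \<circ> transpose j k \<circ> transpose i j"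
    using transpose_comp_triple[of i k j] by auto
  show ?thesis unfolding inv_ij_def
  proof (intro ballI)
    fix x y assume x: "x \<in> basis_idx n" and y: "y \<in> basis_idx n"
    have x1: "transpose i j ` x \<in> basis_idx n" using tau_in[OF assms(1,2) x] .
    have x2: "transpose j k ` transpose i j ` x \<in> basis_idx n" using tau_in[OF assms(2,3) x1] .
    have "M (transpose i k ` x) y = M (transpose i j ` transpose j k ` transpose i j ` x) y"
      unfolding eq by (simp add: image_comp)
    also have "\<dots> = M (transpose j k ` transpose i j ` x) y" using assms(4) x2 y unfolding inv_ij_def by blast
    also have "\<dots> = M (transpose i j ` x) y" using assms(5) x1 y unfolding inv_ij_def by blast
    also have "\<dots> = M x y" using assms(4) x y unfolding inv_ij_def by blast
    finally show "M (transpose i k ` x) y = M x y" .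
  qed
qed

theorem mainTheorem13:
  fixes n :: nat and \<rho> \<sigma> :: qop and \<SS> :: "nat set set"
  assumes "symmetric_state n \<rho>"
    and "\<forall>S\<in>\<SS>. S \<subseteq> {1..n}"
    and "hypergraph_connected n \<SS>"
    and "\<sigma> \<in> compatible_states n \<rho> \<SS>"
  shows "symmetric_state n \<sigma>"
proof -
  have dr: "density_matrix n \<rho>" using assms(1) unfolding symmetric_state_def by blast
  have rinv: "inv_ij n \<rho> i j" if "i \<in> {1..n}" "j \<in> {1..n}" for i j
    using row_inv_of_sym[OF assms(1) that] .
  have ds: "density_matrix n \<sigma>" and comp: "\<forall>S\<in>\<SS>. \<forall>a\<in>Pow S. \<forall>b\<in>Pow S. partial_trace n S \<sigma> a b = partial_trace n S \<rho> a b"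
    using assms(4) unfolding compatible_states_def by auto
  have sinv: "inv_ij n \<sigma> i j" if S: "S \<in> \<SS>" and ij: "i \<in> S" "j \<in> S" for S i j
  proof -
    have Ss: "S \<subseteq> {1..n}" using assms(2) S by blast
    show ?thesis
      by (rule step[OF dr rinv ds Ss ij]) (use Ss ij comp S in auto)
  qed
  have all: "\<forall>i\<in>{1..n}. \<forall>j\<in>{1..n}. inv_ij n \<sigma> i j"
  proof (cases "n = 0")
    case True then show ?thesis by simp
  next
    case False
    then have one: "(1::nat) \<in> {1..n}" by simp
    define X where "X = {k\<in>{1..n}. inv_ij n \<sigma> 1 k}"
    define Y where "Y = {1..n} - X"
    have Y: "Y = {}"
    proof (rule ccontr)
      assume Yne: "Y \<noteq> {}"
      have Xne: "X \<noteq> {}" using one inv_refl unfolding X_def by blast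
      have XY: "X \<inter> Y = {}" "X \<union> Y = {1..n}" unfolding X_def Y_def by auto
      have "\<exists>S\<in>\<SS>. S \<inter> X \<noteq> {} \<and> S \<inter> Y \<noteq> {}"
        using assms(3) Xne Yne XY unfolding hypergraph_connected_def by presburger
      then obtain S where S: "S \<in> \<SS>" "S \<inter> X \<noteq> {}" "S \<inter> Y \<noteq> {}"
        by blast
      then obtain k l where k: "k \<in> S" "k \<in> X" and l: "l \<in> S" "l \<in> Y" by blast
      have "inv_ij n \<sigma> k l" using sinv[OF S(1) k(1) l(1)] .
      moreover have "k \<in> {1..n}" "l \<in> {1..n}" "inv_ij n \<sigma> 1 k" using k l unfolding X_def Y_def by auto
      ultimately have "inv_ij n \<sigma> 1 l" using inv_trans[OF one] by blast
      then have "l \<in> X" using \<open>l \<in> {1..n}\<close> unfolding X_def by blast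
      then show False using l unfolding Y_def by blast
    qed
    show ?thesis
    proof (intro ballI)
      fix i j assume i: "i \<in> {1..n}" and j: "j \<in> {1..n}"
      have "inv_ij n \<sigma> 1 i" "inv_ij n \<sigma> 1 j" using Y i j unfolding Y_def X_def by auto
      then show "inv_ij n \<sigma> i j" using inv_trans[OF i one j] inv_sym by blast
    qed
  qed
  show ?thesis by (rule sym_of_row_inv[OF ds all])
qed

end
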